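(* Let $\kappa_1,\kappa_2,\kappa_3>0$ and let $Y_t$ be the continuous-time Markov chain on $\mathbb N_0$ with transitions $x\to x+1$ at rate $\kappa_1x+\kappa_2x(x-1)$ and $x\to x-2$ at rate $\kappa_3x(x-1)(x-2)$ (the mass-action network $S\to2S$, $2S\to3S$, $3S\to S$). Then every stationary distribution $\pi$ of $Y_t$ with unbounded support satisfies $\pi\in\mathcal P^{1+}_1\cap\mathcal P^{1-}_1$.
   Context: A stationary distribution is a probability measure $\pi$ on $\mathbb N_0$ satisfying the master equation $0=\sum_{\omega}\lambda_\omega(x-\omega)\pi(x-\omega)-\sum_\omega\lambda_\omega(x)\pi(x)$ for all $x$, where $\lambda_\omega(x)$ is the rate of $x\to x+\omega$ (zero at negative arguments). $T_\pi(x)=\sum_{y\ge x}\pi(y)$. For non-negative $f,g$, $f\lesssim g$ (equivalently $g\gtrsim f$) means there are $C,N>0$ with $f(x)\le Cg(x)$ for all $x\ge N$; $\exp(-h(x)(1+o(1)))$ means $\exp(-h(x)(1+\epsilon(x)))$ for some $\epsilon(x)\to0$. $\mathcal P^{1+}_a$ ($a>0$) is the set of probability distributions $\pi$ with $T_\pi(x)\lesssim\exp(-ax\log x(1+o(1)))$, and $\mathcal P^{1-}_a$ those with $T_\pi(x)\gtrsim\exp(-ax\log x(1+o(1)))$. *)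

theory Defs
  imports Complex_Main
begin

definition prob_dist :: "(nat \<Rightarrow> real) \<Rightarrow> bool" where
  "prob_dist p \<longleftrightarrow> (\<forall>x. p x \<ge> 0) \<and> p sums 1"

definition ext_int :: "(nat \<Rightarrow> real) \<Rightarrow> int \<Rightarrow> real" where
  "ext_int p x = (if x < 0 then 0 else p (nat x))"

text \<open>Stationary distribution: a probability distribution satisfying the master equation
  for every integer x; Omega is the finite set of jump vectors and lam w x the rate of
  x -> x + w (assumed zero at negative arguments by the rate function itself).\<close>
definition stationary :: "int set \<Rightarrow> (int \<Rightarrow> int \<Rightarrow> real) \<Rightarrow> (nat \<Rightarrow> real) \<Rightarrow> bool" where
  "stationary Omega lam p \<longleftrightarrow> prob_dist p \<and>
     (\<forall>x::int. 0 = (\<Sum>w\<in>Omega. lam w (x - w) * ext_int p (x - w))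
                   - (\<Sum>w\<in>Omega. lam w x) * ext_int p x)"

definition tail :: "(nat \<Rightarrow> real) \<Rightarrow> nat \<Rightarrow> real" where
  "tail p x = (\<Sum>k. p (x + k))"

definition lesssim :: "(nat \<Rightarrow> real) \<Rightarrow> (nat \<Rightarrow> real) \<Rightarrow> bool" where
  "lesssim f g \<longleftrightarrow> (\<exists>C N. C > 0 \<and> N > 0 \<and> (\<forall>x\<ge>N. f x \<le> C * g x))"

definition P1plus :: "real \<Rightarrow> (nat \<Rightarrow> real) set" where
  "P1plus a = {p. prob_dist p \<and> (\<exists>eps::nat \<Rightarrow> real. eps \<longlonglongrightarrow> 0 \<and>
      lesssim (tail p) (\<lambda>x. exp (- (a * real x * ln (real x) * (1 + eps x)))))}"

definition P1minus :: "real \<Rightarrow> (nat \<Rightarrow> real) set" where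
  "P1minus a = {p. prob_dist p \<and> (\<exists>eps::nat \<Rightarrow> real. eps \<longlonglongrightarrow> 0 \<and>
      lesssim (\<lambda>x. exp (- (a * real x * ln (real x) * (1 + eps x)))) (tail p))}"

definition rates_ex :: "real \<Rightarrow> real \<Rightarrow> real \<Rightarrow> int \<Rightarrow> int \<Rightarrow> real" where
  "rates_ex k1 k2 k3 w x =
     (if x < 0 then 0
      else if w = 1 then k1 * of_int x + k2 * of_int x * (of_int x - 1)
      else if w = -2 then k3 * of_int x * (of_int x - 1) * (of_int x - 2)
      else 0)"

end

theory Submission
  imports Defs "HOL-Real_Asymp.Real_Asymp"
begin

definition AA :: "real \<Rightarrow> real \<Rightarrow> nat \<Rightarrow> real" where
  "AA k1 k2 n = k1 * real n + k2 * real n * (real n - 1)"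
definition BB :: "real \<Rightarrow> nat \<Rightarrow> real" where
  "BB k3 n = k3 * real n * (real n - 1) * (real n - 2)"

lemma master_nat:
  assumes "stationary {1, -2} (rates_ex k1 k2 k3) p"
  shows "0 = AA k1 k2 n * p n + BB k3 (n+3) * p (n+3)
            - (AA k1 k2 (Suc n) + BB k3 (Suc n)) * p (Suc n)"
proof -
  from assms have "0 = (\<Sum>w\<in>{1,-2}. rates_ex k1 k2 k3 w (int (Suc n) - w) * ext_int p (int (Suc n) - w))
                   - (\<Sum>w\<in>{1,-2}. rates_ex k1 k2 k3 w (int (Suc n))) * ext_int p (int (Suc n))"
    unfolding stationary_def by blast
  moreover have "nat (1 + int n) = Suc n" "nat (int n + 3) = n+3" by auto
  ultimately show ?thesis
    by (simp add: rates_ex_def ext_int_def AA_def BB_def algebra_simps)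
qed

lemma flux:
  assumes "stationary {1, -2} (rates_ex k1 k2 k3) p"
  shows "AA k1 k2 n * p n = BB k3 (n+1) * p (n+1) + BB k3 (n+2) * p (n+2)"
proof (induction n)
  case 0
  then show ?case by (simp add: AA_def BB_def)
next
  case (Suc n)
  from master_nat[OF assms, of n] Suc show ?case
    by (simp add: algebra_simps numeral_3_eq_3)
qed

lemma pnonneg: "stationary Om lam p \<Longrightarrow> p n \<ge> 0"
  by (simp add: stationary_def prob_dist_def)

lemma psummable: "stationary Om lam p \<Longrightarrow> summable p"
  by (auto simp: stationary_def prob_dist_def sums_summable)

lemma step_up:
  assumes st: "stationary {1, -2} (rates_ex k1 k2 k3) p" and k: "k1 > 0" "k2 > 0" "k3 > 0"
    and n: "n \<ge> 2"
  shows "k3 * real n * p (n+1) \<le> 2 * (k1 + k2) * p n"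
proof -
  have f: "AA k1 k2 n * p n = BB k3 (n+1) * p (n+1) + BB k3 (n+2) * p (n+2)" by (rule flux[OF st])
  have p1: "p (n+1) \<ge> 0" "p (n+2) \<ge> 0" "p n \<ge> 0" using pnonneg[OF st] by auto
  have rn: "real n \<ge> 2" using n by simp
  have "BB k3 (n+2) \<ge> 0" unfolding BB_def using rn k by simp
  hence "BB k3 (n+1) * p (n+1) \<le> AA k1 k2 n * p n" using f p1 by (simp add: mult_nonneg_nonneg)
  hence a: "real n * (k3 * (real n * real n - 1) * p (n+1)) \<le> real n * ((k1 + k2 * (real n - 1)) * p n)"
    unfolding AA_def BB_def by (simp add: algebra_simps)
  hence b: "k3 * (real n * real n - 1) * p (n+1) \<le> (k1 + k2 * (real n - 1)) * p n"
    using rn by (simp add: mult_le_cancel_left)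
  have c: "(k1 + k2 * (real n - 1)) * p n \<le> (k1 + k2) * real n * p n"
  proof (intro mult_right_mono)
    have "k1 * 1 \<le> k1 * real n" by (rule mult_left_mono) (use rn k in auto)
    moreover have "(k1+k2)*real n = k1*real n + k2 * real n" by (rule distrib_right)
    moreover have "k2 * (real n - 1) = k2 * real n - k2" by (simp add: right_diff_distrib)
    ultimately show "k1 + k2 * (real n - 1) \<le> (k1 + k2) * real n" using k by (smt (verit))
  qed (use p1 in auto)
  have nn: "real n * real n \<ge> 2 * 2" by (rule mult_mono) (use rn in auto)
  have d: "k3 * (real n * real n / 2) * p (n+1) \<le> k3 * (real n * real n - 1) * p (n+1)"
    using nn k p1 by (intro mult_right_mono mult_left_mono) (auto simp: algebra_simps)
  have "real n * (k3 * real n * p (n+1)) \<le> real n * (2 * (k1 + k2) * p n)"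
    using b c d by (simp add: algebra_simps)
  thus ?thesis using rn by (simp add: mult_le_cancel_left)
qed

lemma pow_bound: "(real n + 1) ^ (n+1) \<le> 6 * real n ^ (n+1)" if "n \<ge> 1" for n :: nat
proof -
  have rn: "real n \<ge> 1" using that by simp
  have "(1 + 1 / real n) ^ n \<le> exp (1 / real n) ^ n"
    by (intro power_mono) auto
  also have "\<dots> = exp 1" using rn by (simp add: exp_of_nat_mult[symmetric])
  also have "\<dots> \<le> 3" by (rule exp_le)
  finally have e: "(1 + 1 / real n) ^ n \<le> 3" .
  have "(real n + 1) ^ n = real n ^ n * (1 + 1 / real n) ^ n"
    using rn by (simp add: power_mult_distrib[symmetric] field_simps)
  also have "\<dots> \<le> real n ^ n * 3" using e by (intro mult_left_mono) auto
  finally have g: "(real n + 1) ^ n \<le> 3 * real n ^ n" by simp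
  have "(real n + 1) ^ (n+1) = (real n + 1) * (real n + 1) ^ n" by simp
  also have "\<dots> \<le> (2 * real n) * (3 * real n ^ n)"
    using g rn by (intro mult_mono) auto
  also have "\<dots> = 6 * real n ^ (n+1)" by simp
  finally show ?thesis .
qed

lemma lim1: "(\<lambda>n::nat. (real n+1)*(ln(real n+2) + L)/(real n * ln (real n)) - 1) \<longlonglongrightarrow> 0"
  by real_asymp

lemma lim2: "(\<lambda>n::nat. L / ln (real n)) \<longlonglongrightarrow> 0"
  by real_asymp

lemma p_upper:
  assumes st: "stationary {1, -2} (rates_ex k1 k2 k3) p" and k: "k1 > 0" "k2 > 0" "k3 > 0"
    and n: "n \<ge> 2"
  defines "E \<equiv> 6 * (2 * (k1 + k2) / k3)"
  shows "p n * real n ^ n \<le> (p 2 * 4 / E^2) * E ^ n"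
  using n
proof (induction n rule: dec_induct)
  case base
  have "E > 0" unfolding E_def using k by simp
  then show ?case by simp
next
  case (step n)
  have rn: "real n \<ge> 2" using step by simp
  have E: "E > 0" unfolding E_def using k by simp
  let ?D = "2 * (k1 + k2) / k3"
  have s: "k3 * real n * p (n+1) \<le> 2 * (k1 + k2) * p n" using step_up[OF st k step(1)] .
  have s2: "real n * p (n+1) \<le> ?D * p n"
    using s k by (simp add: field_simps)
  have pb: "(real n + 1) ^ (n+1) \<le> 6 * real n ^ (n+1)" using pow_bound[of n] step by simp
  have p0: "p n \<ge> 0" "p (n+1) \<ge> 0" using pnonneg[OF st] by auto
  have "real n * (p (n+1) * (real n + 1) ^ (n+1)) = (real n * p (n+1)) * (real n + 1) ^ (n+1)" by simp
  also have "\<dots> \<le> (?D * p n) * (6 * real n ^ (n+1))"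
    by (rule mult_mono[OF s2 pb]) (use p0 k in auto)
  also have "\<dots> = real n * (E * (p n * real n ^ n))" unfolding E_def by (simp add: algebra_simps)
  also have "\<dots> \<le> real n * (E * ((p 2 * 4 / E^2) * E ^ n))"
    using step(3) E rn by (intro mult_left_mono) auto
  finally have "p (n+1) * (real n + 1) ^ (n+1) \<le> E * ((p 2 * 4 / E^2) * E ^ n)"
    by (rule mult_left_le_imp_le) (use rn in simp)
  thus ?case by (simp add: algebra_simps)
qed

lemma tail_upper:
  assumes st: "stationary {1, -2} (rates_ex k1 k2 k3) p" and k: "k1 > 0" "k2 > 0" "k3 > 0"
    and n: "n \<ge> 2" and nE: "real n \<ge> 2 * (6 * (2 * (k1 + k2) / k3))"
  shows "tail p n \<le> 2 * (p 2 * 4 / (6 * (2 * (k1 + k2) / k3))^2) * ((6 * (2 * (k1 + k2) / k3)) / real n) ^ n"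
proof -
  define E where "E = 6 * (2 * (k1 + k2) / k3)"
  define K where "K = p 2 * 4 / E^2"
  have E: "E > 0" unfolding E_def using k by simp
  have K: "K \<ge> 0" unfolding K_def using pnonneg[OF st, of 2] by simp
  have rn: "real n \<ge> 2" "real n \<ge> 2 * E" using n nE unfolding E_def by auto
  have r: "E / real n \<le> 1/2" "E / real n \<ge> 0" using rn E by (auto simp: field_simps)
  have bnd: "p (n+k) \<le> K * (E / real n) ^ n * (E / real n) ^ k" for k
  proof -
    have pu: "p (n+k) * real (n+k) ^ (n+k) \<le> K * E ^ (n+k)"
      using p_upper[OF st k, of "n+k"] n unfolding K_def E_def by simp
    have pos: "real (n+k) ^ (n+k) > 0" using n by simp
    have "p (n+k) \<le> K * E ^ (n+k) / real (n+k) ^ (n+k)"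
      using pu pos by (simp add: field_simps)
    also have "\<dots> \<le> K * E ^ (n+k) / real n ^ (n+k)"
      using n K E by (intro divide_left_mono power_mono mult_nonneg_nonneg) auto
    also have "\<dots> = K * (E / real n) ^ n * (E / real n) ^ k"
      by (simp add: power_add power_divide)
    finally show ?thesis .
  qed
  have ps: "summable (\<lambda>k. p (n+k))"
    using summable_ignore_initial_segment[OF psummable[OF st], of n] by (simp add: add.commute)
  have r3: "E / real n < 1" using r by linarith
  have gs: "summable (\<lambda>k. K * (E / real n) ^ n * (E / real n) ^ k)"
    using r r3 by (intro summable_mult summable_geometric) auto
  have "tail p n \<le> (\<Sum>k. K * (E / real n) ^ n * (E / real n) ^ k)"
    unfolding tail_def by (rule suminf_le[OF bnd ps gs])
  also have "\<dots> = K * (E / real n) ^ n * (1 / (1 - E / real n))"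
  proof -
    have "norm (E / real n) < 1" using r r3 by simp
    hence "(\<Sum>k. (E / real n) ^ k) = 1 / (1 - E / real n)" by (rule suminf_geometric)
    thus ?thesis using summable_geometric[OF \<open>norm (E / real n) < 1\<close>]
      by (subst suminf_mult) auto
  qed
  also have "\<dots> \<le> K * (E / real n) ^ n * 2"
  proof (rule mult_left_mono)
    have h: "1 - E / real n \<ge> 1/2" using r by linarith
    have "1 / (1 - E / real n) \<le> 1 / (1/2)" by (rule divide_left_mono[OF h]) (use r3 in auto)
    thus "1 / (1 - E / real n) \<le> 2" by simp
    show "0 \<le> K * (E / real n) ^ n" using K r by simp
  qed
  finally show ?thesis unfolding K_def E_def by (simp add: algebra_simps)
qed

lemma two_case:
  fixes a b1 b2 x0 x1 x2 Q :: real
  assumes "a * x0 = b1 * x1 + b2 * x2" "0 \<le> b1" "b1 \<le> b2" "0 < b2" "2 * Q * b2 \<le> a"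
    "x0 \<ge> 0" "Q \<ge> 0" "x1 \<ge> 0"
  shows "x1 \<ge> Q * x0 \<or> x2 \<ge> Q * x0"
proof (rule ccontr)
  assume "\<not> ?thesis"
  hence h: "x1 < Q * x0" "x2 < Q * x0" by auto
  have "b1 * x1 \<le> b2 * (Q * x0)" using h assms by (intro mult_mono) auto
  moreover have "b2 * x2 < b2 * (Q * x0)" using h assms by simp
  moreover have "2 * Q * b2 * x0 \<le> a * x0" using assms by (intro mult_right_mono) auto
  ultimately show False using assms(1) by (simp add: algebra_simps)
qed

lemma qlem: "m + 3 \<noteq> 0 \<Longrightarrow> k3 \<noteq> (0::real) \<Longrightarrow> 2 * ((k2/(4*k3)) / (m + 3)) * (k3 * Y) = k2 * Y / (2 * (m+3))"
  by (simp add: divide_simps)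

lemma step_low:
  assumes st: "stationary {1, -2} (rates_ex k1 k2 k3) p" and k: "k1 > 0" "k2 > 0" "k3 > 0"
    and n: "n \<ge> 3"
  shows "p (n+1) \<ge> (k2/(4*k3)) / (real (n+1) + 2) * p n \<or> p (n+2) \<ge> (k2/(4*k3)) / (real (n+1) + 2) * p n"
proof -
  define m where "m = real n"
  have m: "m \<ge> 3" using n unfolding m_def by simp
  define Q where "Q = (k2/(4*k3)) / (m + 3)"
  have Qe: "(k2/(4*k3)) / (real (n+1) + 2) = Q" unfolding Q_def m_def by simp
  have b1: "BB k3 (n+1) = k3 * ((m+1) * m * (m-1))" unfolding BB_def m_def by (simp add: algebra_simps)
  have b2: "BB k3 (n+2) = k3 * ((m+2) * (m+1) * m)" unfolding BB_def m_def by (simp add: algebra_simps)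
  have a: "AA k1 k2 n = k1 * m + k2 * (m * (m-1))" unfolding AA_def m_def by (simp add: algebra_simps)
  have pos1: "(m+1) * m * (m-1) \<ge> 0" using m by simp
  have le12: "(m+1) * m * (m-1) \<le> (m+2) * (m+1) * m"
    using m by (intro mult_mono) auto
  have pos2: "(m+2) * (m+1) * m > 0" using m by simp
  have key: "(m+2) * (m+1) \<le> 2 * (m+3) * (m-1)"
  proof -
    have "m * m \<ge> 3 * 3" using m by (intro mult_mono) auto
    thus ?thesis using m by (simp add: algebra_simps)
  qed
  have "2 * Q * (k3 * ((m+2) * (m+1) * m)) = k2 * ((m+2) * (m+1) * m) / (2 * (m+3))"
  proof -
    have "m + 3 \<noteq> 0" "k3 \<noteq> 0" using m k by auto
    thus ?thesis unfolding Q_def by (rule qlem)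
  qed
  also have "\<dots> \<le> k2 * ((2 * (m+3) * (m-1)) * m) / (2 * (m+3))"
    using key k m by (intro divide_right_mono mult_left_mono mult_right_mono) auto
  also have "\<dots> = k2 * (m * (m-1))" using m by (simp add: field_simps)
  also have "\<dots> \<le> k1 * m + k2 * (m * (m-1))" using k m by simp
  finally have q: "2 * Q * BB k3 (n+2) \<le> AA k1 k2 n" using a b2 by simp
  have "p (n+1) \<ge> Q * p n \<or> p (n+2) \<ge> Q * p n"
  proof (rule two_case[OF flux[OF st, of n]])
    show "0 \<le> BB k3 (n+1)" using b1 pos1 k by simp
    show "BB k3 (n+1) \<le> BB k3 (n+2)" using b1 b2 le12 k by simp
    show "0 < BB k3 (n+2)" using b2 pos2 k by simp
    show "2 * Q * BB k3 (n+2) \<le> AA k1 k2 n" by (rule q)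
    show "0 \<le> p n" "0 \<le> p (n+1)" using pnonneg[OF st] by auto
    show "0 \<le> Q" unfolding Q_def using k m by simp
  qed
  thus ?thesis using Qe by simp
qed

lemma lim3: "(\<lambda>n::nat. (ln(real n+2) + L)/ln (real n) - 1) \<longlonglongrightarrow> 0"
  by real_asymp

lemma path:
  assumes st: "stationary {1, -2} (rates_ex k1 k2 k3) p" and k: "k1 > 0" "k2 > 0" "k3 > 0"
    and x0: "x0 \<ge> 3" "real x0 + 2 \<ge> k2/(4*k3)" and n: "n \<ge> x0"
  shows "\<exists>y. n \<le> y \<and> y \<le> n+1 \<and> p y \<ge> p x0 * ((k2/(4*k3)) / (real n + 2)) ^ (n - x0)"
  using n
proof (induction n rule: dec_induct)
  case base
  then show ?case by (intro exI[of _ x0]) auto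
next
  case (step n)
  define c where "c = k2/(4*k3)"
  define q where "q = (\<lambda>n::nat. c / (real n + 2))"
  have c: "c > 0" unfolding c_def using k by simp
  have q0: "0 \<le> q m" for m unfolding q_def using c by simp
  have q1: "q m \<le> 1" if "m \<ge> x0" for m
  proof -
    have "real m + 2 \<ge> c" using x0 that unfolding c_def by simp
    thus ?thesis unfolding q_def using c by simp
  qed
  have qm: "q (Suc n) \<le> q n" unfolding q_def using c by (simp add: frac_le)
  have px0: "p x0 \<ge> 0" using pnonneg[OF st] by auto
  from step(3) obtain y where y: "n \<le> y" "y \<le> n+1" "p y \<ge> p x0 * q n ^ (n - x0)"
    unfolding q_def c_def by blast
  have ex: "Suc n - x0 = Suc (n - x0)" using step(1) by simp
  have mono: "p x0 * q (Suc n) ^ (Suc n - x0) \<le> q (Suc n) * (p x0 * q n ^ (n - x0))"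
  proof -
    have "q (Suc n) ^ (n - x0) \<le> q n ^ (n - x0)" using qm q0 by (intro power_mono) auto
    hence "p x0 * q (Suc n) ^ (n - x0) \<le> p x0 * q n ^ (n - x0)" using px0 by (intro mult_left_mono)
    hence "q (Suc n) * (p x0 * q (Suc n) ^ (n - x0)) \<le> q (Suc n) * (p x0 * q n ^ (n - x0))"
      by (rule mult_left_mono) (use q0 in auto)
    thus ?thesis unfolding ex by (simp add: algebra_simps)
  qed
  have goal: "\<exists>y. Suc n \<le> y \<and> y \<le> Suc n + 1 \<and> p y \<ge> p x0 * q (Suc n) ^ (Suc n - x0)"
  proof (cases "y = n")
    case False
    hence yy: "y = Suc n" using y by auto
    have "p x0 * q (Suc n) ^ (Suc n - x0) \<le> q (Suc n) * (p x0 * q n ^ (n - x0))" by (rule mono)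
    also have "\<dots> \<le> 1 * (p x0 * q n ^ (n - x0))"
      using q1[of "Suc n"] step(1) px0 q0 by (intro mult_right_mono) auto
    also have "\<dots> \<le> p y" using y by simp
    finally show ?thesis using yy by auto
  next
    case True
    have sl: "p (n+1) \<ge> q (Suc n) * p n \<or> p (n+2) \<ge> q (Suc n) * p n"
      using step_low[OF st k, of n] step(1) x0 unfolding q_def c_def by (simp add: add.commute)
    have b: "q (Suc n) * (p x0 * q n ^ (n - x0)) \<le> q (Suc n) * p n"
      using y True q0 by (intro mult_left_mono) auto
    from sl show ?thesis
    proof
      assume h: "p (n+1) \<ge> q (Suc n) * p n"
      show ?thesis using mono b h by (intro exI[of _ "n+1"]) auto
    next
      assume h: "p (n+2) \<ge> q (Suc n) * p n"
      show ?thesis using mono b h by (intro exI[of _ "n+2"]) auto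
    qed
  qed
  thus ?case unfolding q_def c_def by simp
qed

lemma h1:
  assumes "n \<ge> 2" "c > 0"
  shows "exp (- (1 * real n * ln (real n) * (1 + ((ln (real n + 2) + - ln c) / ln (real n) - 1))))
         = (c / (real n + 2)) ^ n"
proof -
  have l: "ln (real n) > 0" using assms by simp
  have "1 * real n * ln (real n) * (1 + ((ln (real n + 2) + - ln c) / ln (real n) - 1))
        = real n * (ln (real n + 2) - ln c)" using l by (simp add: field_simps)
  also have "\<dots> = - (real n * ln (c / (real n + 2)))" using assms by (simp add: ln_div algebra_simps)
  finally have e: "- (1 * real n * ln (real n) * (1 + ((ln (real n + 2) + - ln c) / ln (real n) - 1)))
        = real n * ln (c / (real n + 2))" by simp
  show ?thesis unfolding e exp_of_nat_mult using assms by simp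
qed

lemma h2:
  assumes "n \<ge> 2" "E > 0"
  shows "exp (- (1 * real n * ln (real n) * (1 + (- ln E) / ln (real n)))) = (E / real n) ^ n"
proof -
  have l: "ln (real n) > 0" using assms by simp
  have "1 * real n * ln (real n) * (1 + (- ln E) / ln (real n)) = real n * (ln (real n) - ln E)"
    using l by (simp add: field_simps)
  also have "\<dots> = - (real n * ln (E / real n))" using assms by (simp add: ln_div algebra_simps)
  finally have e: "- (1 * real n * ln (real n) * (1 + (- ln E) / ln (real n))) = real n * ln (E / real n)"
    by simp
  show ?thesis unfolding e exp_of_nat_mult using assms by simp
qed

lemma tail_ge:
  assumes st: "stationary Om lam p" and "n \<le> y"
  shows "p y \<le> tail p n"
proof -
  have ps: "summable (\<lambda>k. p (n+k))"
    using summable_ignore_initial_segment[OF psummable[OF st], of n] by (simp add: add.commute)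
  have "sum (\<lambda>k. p (n+k)) {y - n} \<le> (\<Sum>k. p (n+k))"
    by (rule sum_le_suminf[OF ps]) (use pnonneg[OF st] in auto)
  thus ?thesis using assms(2) unfolding tail_def by simp
qed

theorem mainTheorem12:
  fixes k1 k2 k3 :: real and p :: "nat \<Rightarrow> real"
  assumes "k1 > 0" and "k2 > 0" and "k3 > 0"
    and "stationary {1, -2} (rates_ex k1 k2 k3) p"
    and "\<forall>N. \<exists>x\<ge>N. p x > 0"
  shows "p \<in> P1plus 1 \<inter> P1minus 1"
proof -
  note st = assms(4) and k = assms(1-3)
  have pd: "prob_dist p" using st by (simp add: stationary_def)
  define c where "c = k2/(4*k3)"
  have c: "c > 0" unfolding c_def using k by simp
  define E where "E = 6 * (2 * (k1 + k2) / k3)"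
  have E: "E > 0" unfolding E_def using k by simp
  define K where "K = p 2 * 4 / E^2"
  have K: "K \<ge> 0" unfolding K_def using pnonneg[OF st, of 2] by simp
  obtain x0 where x0: "x0 \<ge> max 3 (nat \<lceil>c\<rceil>)" "p x0 > 0" using assms(5) by blast
  have x0': "x0 \<ge> 3" "real x0 + 2 \<ge> k2/(4*k3)"
  proof -
    show "x0 \<ge> 3" using x0 by simp
    have "real x0 \<ge> c" using x0(1) by linarith
    thus "real x0 + 2 \<ge> k2/(4*k3)" unfolding c_def by simp
  qed
  have minus: "p \<in> P1minus 1"
    unfolding P1minus_def
  proof (intro CollectI conjI exI[of _ "\<lambda>n. (ln (real n + 2) + - ln c) / ln (real n) - 1"])
    show "prob_dist p" by (rule pd)
    show "(\<lambda>n. (ln (real n + 2) + - ln c) / ln (real n) - 1) \<longlonglongrightarrow> 0" by (rule lim3)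
    show "lesssim (\<lambda>x. exp (- (1 * real x * ln (real x) * (1 + ((ln (real x + 2) + - ln c) / ln (real x) - 1))))) (tail p)"
      unfolding lesssim_def
    proof (intro exI[of _ "1 / p x0"] exI[of _ x0] conjI allI impI)
      show "1 / p x0 > 0" using x0 by simp
      show "x0 > 0" using x0' by simp
      fix n assume n: "x0 \<le> n"
      have n2: "n \<ge> 2" using n x0' by simp
      obtain y where y: "n \<le> y" "y \<le> n+1" "p y \<ge> p x0 * (c / (real n + 2)) ^ (n - x0)"
        using path[OF st k x0' n] unfolding c_def by blast
      have q1: "c / (real n + 2) \<le> 1" "0 \<le> c / (real n + 2)"
      proof -
        have "c \<le> real n + 2" using x0'(2) n unfolding c_def by linarith
        thus "c / (real n + 2) \<le> 1" "0 \<le> c / (real n + 2)" using c by auto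
      qed
      have "(c / (real n + 2)) ^ n \<le> (c / (real n + 2)) ^ (n - x0)"
        using q1 by (intro power_decreasing) auto
      hence "p x0 * (c / (real n + 2)) ^ n \<le> tail p n"
        using y tail_ge[OF st y(1)] x0(2) by (smt (verit) mult_left_mono)
      hence "(c / (real n + 2)) ^ n \<le> 1 / p x0 * tail p n" using x0(2) by (simp add: field_simps)
      thus "exp (- (1 * real n * ln (real n) * (1 + ((ln (real n + 2) + - ln c) / ln (real n) - 1)))) \<le> 1 / p x0 * tail p n"
        using h1[OF n2 c] by simp
    qed
  qed
  have plus: "p \<in> P1plus 1"
    unfolding P1plus_def
  proof (intro CollectI conjI exI[of _ "\<lambda>n. (- ln E) / ln (real n)"])
    show "prob_dist p" by (rule pd)
    show "(\<lambda>n. (- ln E) / ln (real n)) \<longlonglongrightarrow> 0" by (rule lim2)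
    show "lesssim (tail p) (\<lambda>x. exp (- (1 * real x * ln (real x) * (1 + (- ln E) / ln (real x)))))"
      unfolding lesssim_def
    proof (intro exI[of _ "2 * K + 1"] exI[of _ "max 2 (nat \<lceil>2 * E\<rceil>)"] conjI allI impI)
      show "2 * K + 1 > 0" using K by simp
      show "max 2 (nat \<lceil>2 * E\<rceil>) > 0" by simp
      fix n assume n: "max 2 (nat \<lceil>2 * E\<rceil>) \<le> n"
      have n2: "n \<ge> 2" using n by simp
      have nE: "real n \<ge> 2 * E" using n by linarith
      have t: "tail p n \<le> 2 * K * (E / real n) ^ n"
        using tail_upper[OF st k n2] nE unfolding K_def E_def by simp
      have "2 * K * (E / real n) ^ n \<le> (2 * K + 1) * (E / real n) ^ n"
        using E by (intro mult_right_mono) auto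
      thus "tail p n \<le> (2 * K + 1) * exp (- (1 * real n * ln (real n) * (1 + (- ln E) / ln (real n))))"
        using t h2[OF n2 E] by simp
    qed
  qed
  show ?thesis using plus minus by simp
qed

end
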